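(* Let $\mathbf{k}$ be a field, $p\ge3$ an integer, $S=\mathbf{k}[e_1,\dots,e_{2p}]$, $f_0=t^2+e_pt+e_{2p}$ and $f_i=e_it+e_{p+i}$ for $1\le i\le p-1$ in $S[t]$, and $I=\langle f_0,\dots,f_{p-1}\rangle\cap S$. Let $\varphi:S\to\mathbf{k}[u_1,\dots,u_p,\alpha]$ be the $\mathbf{k}$-algebra homomorphism with $\varphi(e_i)=u_i$ for $1\le i\le p-1$, $\varphi(e_p)=u_p+\alpha$, and $\varphi(e_i)=u_{i-p}\alpha$ for $p+1\le i\le 2p$. Then $I=\ker(\varphi)$. *)

theory Defs
  imports "HOL-Library.Poly_Mapping" "HOL-Computational_Algebra.Polynomial"
begin

text \<open>Multivariate polynomials over a coefficient ring 'a in the variables indexed by nat: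
  a polynomial is a finitely supported map from monomials (finitely supported exponent
  vectors nat \<Rightarrow>0 nat) to coefficients; the ring structure is the convolution product
  from HOL-Library.Poly_Mapping.\<close>

type_synonym 'a mpoly = "(nat \<Rightarrow>\<^sub>0 nat) \<Rightarrow>\<^sub>0 'a"

definition mvar :: "nat \<Rightarrow> 'a::comm_ring_1 mpoly" where
  "mvar v = Poly_Mapping.single (Poly_Mapping.single v 1) 1"

definition mconst :: "'a::comm_ring_1 \<Rightarrow> 'a mpoly" where
  "mconst c = Poly_Mapping.single 0 c"

definition mvars :: "'a::zero mpoly \<Rightarrow> nat set" where
  "mvars P = \<Union> (Poly_Mapping.keys ` Poly_Mapping.keys P)"

definition msubst :: "(nat \<Rightarrow> 'a::comm_ring_1 mpoly) \<Rightarrow> 'a mpoly \<Rightarrow> 'a mpoly" where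
  "msubst \<sigma> P = (\<Sum>m\<in>Poly_Mapping.keys P.
      mconst (Poly_Mapping.lookup P m) * (\<Prod>v\<in>Poly_Mapping.keys m. \<sigma> v ^ Poly_Mapping.lookup m v))"

text \<open>S = k[e_1,...,e_{2p}], with e_i the variable number i.\<close>
definition S_ring :: "nat \<Rightarrow> 'a::comm_ring_1 mpoly set" where
  "S_ring p = {g. mvars g \<subseteq> {1..2*p}}"

definition fgen :: "nat \<Rightarrow> nat \<Rightarrow> 'a::comm_ring_1 mpoly poly" where
  "fgen p i = (if i = 0 then [:mvar (2*p), mvar p, 1:] else [:mvar (p+i), mvar i:])"

text \<open>I = <f_0,...,f_{p-1}> \<inter> S, where the ideal is taken in S[t]
  (elements of S are identified with constant polynomials in t).\<close>
definition I_ideal :: "nat \<Rightarrow> 'a::comm_ring_1 mpoly set" where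
  "I_ideal p = {g \<in> S_ring p. \<exists>c :: nat \<Rightarrow> 'a mpoly poly.
      (\<forall>i<p. \<forall>j. coeff (c i) j \<in> S_ring p) \<and> [:g:] = (\<Sum>i<p. c i * fgen p i)}"

text \<open>phi : S \<rightarrow> k[u_1,...,u_p,alpha], with u_i the variable i (1 \<le> i \<le> p) and alpha the
  variable 0: e_i \<mapsto> u_i (i<p), e_p \<mapsto> u_p + alpha, e_i \<mapsto> u_{i-p} alpha (p<i\<le>2p).\<close>
definition phi_img :: "nat \<Rightarrow> nat \<Rightarrow> 'a::comm_ring_1 mpoly" where
  "phi_img p i = (if i < p then mvar i else if i = p then mvar p + mvar 0
                  else mvar (i - p) * mvar 0)"

definition phi :: "nat \<Rightarrow> 'a::comm_ring_1 mpoly \<Rightarrow> 'a mpoly" where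
  "phi p = msubst (phi_img p)"

definition ker_phi :: "nat \<Rightarrow> 'a::comm_ring_1 mpoly set" where
  "ker_phi p = {g \<in> S_ring p. phi p g = 0}"

end

theory Submission
  imports Defs
begin

definition rhom :: "('a::comm_ring_1 \<Rightarrow> 'b::comm_ring_1) \<Rightarrow> bool" where
  "rhom h \<longleftrightarrow> (\<forall>a b. h (a + b) = h a + h b) \<and> (\<forall>a b. h (a * b) = h a * h b) \<and> h 1 = 1"

lemma rhom_add: "rhom h \<Longrightarrow> h (a + b) = h a + h b" by (simp add: rhom_def)
lemma rhom_mult: "rhom h \<Longrightarrow> h (a * b) = h a * h b" by (simp add: rhom_def)
lemma rhom_one: "rhom h \<Longrightarrow> h 1 = 1" by (simp add: rhom_def)
lemma rhom_zero: "rhom h \<Longrightarrow> h 0 = 0"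
proof -
  assume "rhom h" then have "h (0+0) = h 0 + h 0" by (rule rhom_add)
  then show ?thesis by simp
qed
lemma rhom_uminus: "rhom h \<Longrightarrow> h (- a) = - h a"
proof -
  assume h: "rhom h" then have "h (a + - a) = h a + h (- a)" by (rule rhom_add)
  then show ?thesis using rhom_zero[OF h] by (simp add: eq_neg_iff_add_eq_0 add.commute)
qed
lemma rhom_diff: "rhom h \<Longrightarrow> h (a - b) = h a - h b"
  using rhom_add[of h a "-b"] rhom_uminus[of h b] by simp
lemma rhom_sum: "rhom h \<Longrightarrow> h (sum f A) = (\<Sum>x\<in>A. h (f x))"
  by (induction A rule: infinite_finite_induct) (auto simp: rhom_zero rhom_add)
lemma rhom_prod: "rhom h \<Longrightarrow> h (prod f A) = (\<Prod>x\<in>A. h (f x))"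
  by (induction A rule: infinite_finite_induct) (auto simp: rhom_one rhom_mult)
lemma rhom_power: "rhom h \<Longrightarrow> h (a ^ n) = h a ^ n"
  by (induction n) (auto simp: rhom_one rhom_mult)
lemma rhom_comp: "rhom h \<Longrightarrow> rhom k \<Longrightarrow> rhom (h \<circ> k)" by (simp add: rhom_def)

definition mmono :: "(nat \<Rightarrow> 'b::comm_ring_1) \<Rightarrow> (nat \<Rightarrow>\<^sub>0 nat) \<Rightarrow> 'b" where
  "mmono \<sigma> m = (\<Prod>v\<in>Poly_Mapping.keys m. \<sigma> v ^ Poly_Mapping.lookup m v)"

definition mev :: "(nat \<Rightarrow> 'b::comm_ring_1) \<Rightarrow> ('a::comm_ring_1 \<Rightarrow> 'b) \<Rightarrow> 'a mpoly \<Rightarrow> 'b" where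
  "mev \<sigma> \<kappa> P = (\<Sum>m\<in>Poly_Mapping.keys P. \<kappa> (Poly_Mapping.lookup P m) * mmono \<sigma> m)"

lemma msubst_mev: "msubst \<sigma> = mev \<sigma> mconst"
  by (rule ext) (simp add: msubst_def mev_def mmono_def)

lemma mmono_superset:
  assumes "finite K" "Poly_Mapping.keys m \<subseteq> K"
  shows "mmono \<sigma> m = (\<Prod>v\<in>K. \<sigma> v ^ Poly_Mapping.lookup m v)"
  unfolding mmono_def
  by (rule prod.mono_neutral_left[OF assms]) (simp add: in_keys_iff)

lemma mmono_add: "mmono \<sigma> (a + b) = mmono \<sigma> a * mmono \<sigma> b"
proof -
  let ?K = "Poly_Mapping.keys a \<union> Poly_Mapping.keys b"
  have f: "finite ?K" by simp
  have "mmono \<sigma> (a+b) = (\<Prod>v\<in>?K. \<sigma> v ^ Poly_Mapping.lookup (a+b) v)"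
    by (rule mmono_superset[OF f keys_add])
  also have "\<dots> = (\<Prod>v\<in>?K. \<sigma> v ^ Poly_Mapping.lookup a v) * (\<Prod>v\<in>?K. \<sigma> v ^ Poly_Mapping.lookup b v)"
    by (simp add: lookup_add power_add prod.distrib)
  also have "\<dots> = mmono \<sigma> a * mmono \<sigma> b"
    by (simp add: mmono_superset[OF f])
  finally show ?thesis .
qed

lemma mmono_zero [simp]: "mmono \<sigma> 0 = 1" by (simp add: mmono_def)

lemma mev_superset:
  assumes "rhom \<kappa>" "finite K" "Poly_Mapping.keys P \<subseteq> K"
  shows "mev \<sigma> \<kappa> P = (\<Sum>m\<in>K. \<kappa> (Poly_Mapping.lookup P m) * mmono \<sigma> m)"
  unfolding mev_def
  by (rule sum.mono_neutral_left[OF assms(2,3)]) (simp add: in_keys_iff rhom_zero[OF assms(1)])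

lemma mev_add: assumes "rhom \<kappa>" shows "mev \<sigma> \<kappa> (P + Q) = mev \<sigma> \<kappa> P + mev \<sigma> \<kappa> Q"
proof -
  let ?K = "Poly_Mapping.keys P \<union> Poly_Mapping.keys Q"
  have f: "finite ?K" by simp
  show ?thesis
    using mev_superset[OF assms f keys_add] mev_superset[OF assms f, of P] mev_superset[OF assms f, of Q]
    by (simp add: lookup_add rhom_add[OF assms] distrib_right sum.distrib)
qed

lemma mev_zero [simp]: "mev \<sigma> \<kappa> 0 = 0" by (simp add: mev_def)

lemma mev_single: "rhom \<kappa> \<Longrightarrow> mev \<sigma> \<kappa> (Poly_Mapping.single m c) = \<kappa> c * mmono \<sigma> m"
  by (cases "c = 0") (simp_all add: mev_def rhom_zero)

lemma mev_sum: "rhom \<kappa> \<Longrightarrow> mev \<sigma> \<kappa> (sum f A) = (\<Sum>x\<in>A. mev \<sigma> \<kappa> (f x))"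
  by (induction A rule: infinite_finite_induct) (auto simp: mev_add)

lemma pm_repr: "(\<Sum>m\<in>Poly_Mapping.keys P. Poly_Mapping.single m (Poly_Mapping.lookup P m)) = (P :: 'k \<Rightarrow>\<^sub>0 'b::comm_monoid_add)"
  by (rule poly_mapping_eqI) (auto simp: lookup_sum lookup_single when_def in_keys_iff)

lemma mev_mult: assumes "rhom \<kappa>" shows "mev \<sigma> \<kappa> (P * Q) = mev \<sigma> \<kappa> P * mev \<sigma> \<kappa> Q"
proof -
  have "P * Q = (\<Sum>a\<in>Poly_Mapping.keys P. Poly_Mapping.single a (Poly_Mapping.lookup P a)) *
      (\<Sum>b\<in>Poly_Mapping.keys Q. Poly_Mapping.single b (Poly_Mapping.lookup Q b))"
    by (simp only: pm_repr)
  also have "\<dots> = (\<Sum>a\<in>Poly_Mapping.keys P. \<Sum>b\<in>Poly_Mapping.keys Q.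
      Poly_Mapping.single (a+b) (Poly_Mapping.lookup P a * Poly_Mapping.lookup Q b))"
    by (simp add: sum_distrib_left sum_distrib_right mult_single sum.swap[of _ "Poly_Mapping.keys Q"])
  finally have e: "P * Q = \<dots>" .
  have "mev \<sigma> \<kappa> (P*Q) = (\<Sum>a\<in>Poly_Mapping.keys P. \<Sum>b\<in>Poly_Mapping.keys Q.
      \<kappa> (Poly_Mapping.lookup P a * Poly_Mapping.lookup Q b) * mmono \<sigma> (a+b))"
    by (simp add: e mev_sum[OF assms] mev_single[OF assms])
  also have "\<dots> = (\<Sum>a\<in>Poly_Mapping.keys P. \<Sum>b\<in>Poly_Mapping.keys Q.
     (\<kappa> (Poly_Mapping.lookup P a) * mmono \<sigma> a) * (\<kappa> (Poly_Mapping.lookup Q b) * mmono \<sigma> b))"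
    by (simp add: rhom_mult[OF assms] mmono_add mult_ac)
  also have "\<dots> = mev \<sigma> \<kappa> P * mev \<sigma> \<kappa> Q"
    by (simp add: mev_def sum_distrib_left sum_distrib_right sum.swap[of _ "Poly_Mapping.keys Q"])
  finally show ?thesis .
qed

lemma mev_one: "rhom \<kappa> \<Longrightarrow> mev \<sigma> \<kappa> 1 = 1"
  using mev_single[of \<kappa> \<sigma> 0 1] by (simp add: rhom_one)

lemma rhom_mev: "rhom \<kappa> \<Longrightarrow> rhom (mev \<sigma> \<kappa>)"
  by (simp add: rhom_def mev_add mev_mult mev_one)

lemma mev_mvar: "rhom \<kappa> \<Longrightarrow> mev \<sigma> \<kappa> (mvar v) = \<sigma> v"
  by (simp add: mvar_def mev_single rhom_one mmono_def)

lemma mev_mconst: "rhom \<kappa> \<Longrightarrow> mev \<sigma> \<kappa> (mconst c) = \<kappa> c"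
  by (simp add: mconst_def mev_single)

lemma rhom_mconst: "rhom (mconst :: 'a::comm_ring_1 \<Rightarrow> 'a mpoly)"
  by (simp add: rhom_def mconst_def single_add mult_single)

lemma mvar_power: "(mvar v :: 'a::comm_ring_1 mpoly) ^ n = Poly_Mapping.single (Poly_Mapping.single v n) 1"
proof (induction n)
  case (Suc n)
  have "Poly_Mapping.single v (Suc n) = Poly_Mapping.single v 1 + Poly_Mapping.single v n"
    by (simp add: single_add[symmetric])
  then show ?case using Suc by (simp add: mvar_def mult_single)
qed simp

lemma prod_singles: "finite A \<Longrightarrow> (\<Prod>x\<in>A. Poly_Mapping.single (f x) (1::'a::comm_ring_1)) = Poly_Mapping.single (\<Sum>x\<in>A. f x) 1"
  by (induction A rule: finite_induct) (simp_all add: mult_single)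

lemma mmono_mvar: "mmono mvar m = (Poly_Mapping.single m 1 :: 'a::comm_ring_1 mpoly)"
  unfolding mmono_def mvar_power by (simp add: prod_singles pm_repr)

lemma mev_id: "mev mvar mconst P = (P :: 'a::comm_ring_1 mpoly)"
  unfolding mev_def mmono_mvar mconst_def mult_single by (simp add: pm_repr)

lemma rhom_mev_comp: assumes "rhom h" shows "h (mev \<sigma> \<kappa> P) = mev (h \<circ> \<sigma>) (h \<circ> \<kappa>) P"
  by (simp add: mev_def mmono_def rhom_sum[OF assms] rhom_mult[OF assms] rhom_prod[OF assms] rhom_power[OF assms])

definition idl :: "'b::comm_ring_1 set \<Rightarrow> bool" where
  "idl J \<longleftrightarrow> 0 \<in> J \<and> (\<forall>x\<in>J. \<forall>y\<in>J. x + y \<in> J) \<and> (\<forall>x\<in>J. \<forall>r. r * x \<in> J)"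

lemma idl_addc: "idl J \<Longrightarrow> a - b \<in> J \<Longrightarrow> c - d \<in> J \<Longrightarrow> (a + c) - (b + d) \<in> J"
  unfolding idl_def by (metis add_diff_add)

lemma idl_multc: "idl J \<Longrightarrow> a - b \<in> J \<Longrightarrow> c - d \<in> J \<Longrightarrow> a * c - b * d \<in> J"
proof -
  assume J: "idl J" "a - b \<in> J" "c - d \<in> J"
  have "a * c - b * d = a * (c - d) + d * (a - b)" by (simp add: algebra_simps)
  then show ?thesis using J unfolding idl_def by metis
qed

lemma idl_sumc: "idl J \<Longrightarrow> (\<And>x. x \<in> A \<Longrightarrow> f x - g x \<in> J) \<Longrightarrow> sum f A - sum g A \<in> J"
  by (induction A rule: infinite_finite_induct) (auto simp: idl_def intro: idl_addc)

lemma idl_prodc: "idl J \<Longrightarrow> (\<And>x. x \<in> A \<Longrightarrow> f x - g x \<in> J) \<Longrightarrow> prod f A - prod g A \<in> J"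
  by (induction A rule: infinite_finite_induct) (auto simp: idl_def intro: idl_multc)

lemma idl_powerc: "idl J \<Longrightarrow> a - b \<in> J \<Longrightarrow> a ^ n - b ^ n \<in> J"
  by (induction n) (auto simp: idl_def intro: idl_multc)

lemma mev_cong:
  assumes J: "idl J" and h: "\<And>v. v \<in> mvars P \<Longrightarrow> \<sigma>1 v - \<sigma>2 v \<in> J"
  shows "mev \<sigma>1 \<kappa> P - mev \<sigma>2 \<kappa> P \<in> J"
  unfolding mev_def mmono_def
proof (rule idl_sumc[OF J], rule idl_multc[OF J])
  fix m assume m: "m \<in> Poly_Mapping.keys P"
  show "\<kappa> (Poly_Mapping.lookup P m) - \<kappa> (Poly_Mapping.lookup P m) \<in> J" using J by (simp add: idl_def)
  show "(\<Prod>v\<in>Poly_Mapping.keys m. \<sigma>1 v ^ Poly_Mapping.lookup m v) - (\<Prod>v\<in>Poly_Mapping.keys m. \<sigma>2 v ^ Poly_Mapping.lookup m v) \<in> J"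
  proof (rule idl_prodc[OF J], rule idl_powerc[OF J], rule h)
    fix v assume "v \<in> Poly_Mapping.keys m"
    then show "v \<in> mvars P" using m by (auto simp: mvars_def)
  qed
qed

lemma mev_cong0:
  assumes h: "\<And>v. v \<in> mvars P \<Longrightarrow> \<sigma>1 v = \<sigma>2 v"
  shows "mev \<sigma>1 \<kappa> P = mev \<sigma>2 \<kappa> P"
proof -
  have "idl {0::'b}" by (simp add: idl_def)
  from mev_cong[OF this, of P \<sigma>1 \<sigma>2 \<kappa>] h show ?thesis by simp
qed

lemma mvars_add: "mvars (P + Q) \<subseteq> mvars P \<union> mvars Q"
proof
  fix x assume "x \<in> mvars (P + Q)"
  then obtain m where m: "m \<in> Poly_Mapping.keys (P + Q)" "x \<in> Poly_Mapping.keys m" by (auto simp: mvars_def)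
  from m(1) have "m \<in> Poly_Mapping.keys P \<union> Poly_Mapping.keys Q" using keys_add[of P Q] by (rule subsetD[rotated])
  then show "x \<in> mvars P \<union> mvars Q" using m(2) by (auto simp: mvars_def)
qed

lemma mvars_mult: "mvars (P * Q) \<subseteq> mvars P \<union> mvars Q"
proof
  fix x assume "x \<in> mvars (P * Q)"
  then obtain m where m: "m \<in> Poly_Mapping.keys (P*Q)" "x \<in> Poly_Mapping.keys m" by (auto simp: mvars_def)
  then obtain a b where "m = a + b" "a \<in> Poly_Mapping.keys P" "b \<in> Poly_Mapping.keys Q" using keys_mult by blast
  then show "x \<in> mvars P \<union> mvars Q" using m(2) keys_add[of a b] by (auto simp: mvars_def)
qed

lemma mvars_zero [simp]: "mvars 0 = {}" by (simp add: mvars_def)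
lemma mvars_one [simp]: "mvars (1::'a::comm_ring_1 mpoly) = {}" by (simp add: mvars_def)
lemma mvars_mconst [simp]: "mvars (mconst c) = {}" by (simp add: mvars_def mconst_def)
lemma mvars_mvar [simp]: "mvars (mvar v :: 'a::comm_ring_1 mpoly) = {v}" by (simp add: mvars_def mvar_def)

lemma mvars_sum: "mvars (sum f A) \<subseteq> (\<Union>x\<in>A. mvars (f x))"
proof (induction A rule: infinite_finite_induct)
  case (insert x F) then show ?case using mvars_add[of "f x" "sum f F"] by auto
qed auto
lemma mvars_prod: "mvars (prod f A :: 'a::comm_ring_1 mpoly) \<subseteq> (\<Union>x\<in>A. mvars (f x))"
proof (induction A rule: infinite_finite_induct)
  case (insert x F) then show ?case using mvars_mult[of "f x" "prod f F"] by auto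
qed auto
lemma mvars_power: "mvars (a ^ n :: 'a::comm_ring_1 mpoly) \<subseteq> mvars a"
proof (induction n)
  case (Suc n) then show ?case using mvars_mult[of a "a ^ n"] by auto
qed simp

lemma mev_vars:
  assumes "\<And>v. mvars (\<sigma> v) \<subseteq> V"
  shows "mvars (mev \<sigma> mconst P) \<subseteq> V"
proof -
  have pw: "mvars (\<sigma> v ^ n) \<subseteq> V" for v n using mvars_power assms by blast
  have pr: "mvars (mmono \<sigma> m) \<subseteq> V" for m
    unfolding mmono_def using mvars_prod pw by blast
  have t: "mvars (mconst c * mmono \<sigma> m) \<subseteq> V" for c m
    using mvars_mult[of "mconst c" "mmono \<sigma> m"] pr by auto
  show ?thesis unfolding mev_def using mvars_sum t by blast
qed

lemma rhom_const_poly: "rhom (\<lambda>x::'a::comm_ring_1. [:x:])"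
  unfolding rhom_def
proof (intro conjI allI)
  fix a b :: 'a
  show "[:a + b:] = [:a:] + [:b:]" by simp
  show "[:a * b:] = [:a:] * [:b:]" by simp
  show "[:1::'a:] = 1" by (rule pCons_one)
qed

lemma map_poly_add_h: assumes "rhom h" shows "map_poly h (p + q) = map_poly h p + map_poly h q"
  by (rule poly_eqI) (simp add: coeff_map_poly rhom_zero[OF assms] rhom_add[OF assms])

lemma map_poly_smult_h: assumes "rhom h" shows "map_poly h (smult a q) = smult (h a) (map_poly h q)"
  by (rule poly_eqI) (simp add: coeff_map_poly rhom_zero[OF assms] rhom_mult[OF assms])

lemma map_poly_mult_h: assumes "rhom h" shows "map_poly h (p * q) = map_poly h p * map_poly h q"
proof (induction p)
  case (pCons a p)
  then show ?case
    by (simp add: map_poly_add_h[OF assms] map_poly_smult_h[OF assms] map_poly_pCons rhom_zero[OF assms])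
qed simp

lemma rhom_map_poly: assumes "rhom h" shows "rhom (map_poly h)"
  using assms by (simp add: rhom_def map_poly_add_h[OF assms] map_poly_mult_h[OF assms])

lemma rhom_poly_eval: "rhom (\<lambda>q. poly q x)"
  by (simp add: rhom_def)


lemma incl1:
  fixes p :: nat
  assumes "p \<ge> 3"
  shows "(I_ideal p :: 'a::field mpoly set) \<subseteq> ker_phi p"
proof -
  have hphi: "rhom (phi p :: 'a mpoly \<Rightarrow> 'a mpoly)"
    unfolding phi_def msubst_mev by (rule rhom_mev[OF rhom_mconst])
  have phimvar: "phi p (mvar v :: 'a mpoly) = phi_img p v" for v
    unfolding phi_def msubst_mev by (rule mev_mvar[OF rhom_mconst])
  show "(I_ideal p :: 'a mpoly set) \<subseteq> ker_phi p"
  proof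
    fix g :: "'a mpoly" assume "g \<in> I_ideal p"
    then obtain c where gS: "g \<in> S_ring p" and gc: "[:g:] = (\<Sum>i<p. c i * fgen p i)"
      unfolding I_ideal_def by blast
    define E where "E = (\<lambda>q. poly q (- mvar 0)) \<circ> map_poly (phi p :: 'a mpoly \<Rightarrow> _)"
    have hE: "rhom E" unfolding E_def by (intro rhom_comp rhom_poly_eval rhom_map_poly hphi)
    have Ef: "E (fgen p i) = 0" if "i < p" for i
    proof (cases "i = 0")
      case True
      have "phi_img p (2*p) = (mvar p * mvar 0 :: 'a mpoly)" "phi_img p p = (mvar p + mvar 0 :: 'a mpoly)"
        using assms by (auto simp: phi_img_def mult_2)
      then show ?thesis using True
        by (simp add: E_def fgen_def map_poly_pCons rhom_zero[OF hphi] rhom_one[OF hphi] phimvar algebra_simps)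
    next
      case False
      have "phi_img p (p+i) = (mvar i * mvar 0 :: 'a mpoly)" "phi_img p i = (mvar i :: 'a mpoly)"
        using that False by (auto simp: phi_img_def)
      then show ?thesis using False
        by (simp add: E_def fgen_def map_poly_pCons rhom_zero[OF hphi] phimvar algebra_simps)
    qed
    have "phi p g = E [:g:]" by (simp add: E_def map_poly_pCons rhom_zero[OF hphi])
    also have "\<dots> = 0" by (simp add: gc rhom_sum[OF hE] rhom_mult[OF hE] Ef)
    finally show "g \<in> ker_phi p" using gS by (simp add: ker_phi_def)
  qed
qed

lemma incl2:
  fixes p :: nat
  assumes "p \<ge> 3"
  shows "(ker_phi p :: 'a::field mpoly set) \<subseteq> I_ideal p"
proof -
  have hphi: "rhom (phi p :: 'a mpoly \<Rightarrow> 'a mpoly)"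
    unfolding phi_def msubst_mev by (rule rhom_mev[OF rhom_mconst])
  have phimvar: "phi p (mvar v :: 'a mpoly) = phi_img p v" for v
    unfolding phi_def msubst_mev by (rule mev_mvar[OF rhom_mconst])
  show "(ker_phi p :: 'a mpoly set) \<subseteq> I_ideal p"
  proof
    fix g :: "'a mpoly" assume "g \<in> ker_phi p"
    then have gS: "mvars g \<subseteq> {1..2*p}" and g0: "phi p g = 0"
      by (auto simp: ker_phi_def S_ring_def)
    define \<kappa>0 :: "'a \<Rightarrow> 'a mpoly poly" where "\<kappa>0 = (\<lambda>x. [:x:]) \<circ> mconst"
    have h\<kappa>0: "rhom \<kappa>0" unfolding \<kappa>0_def by (intro rhom_comp rhom_const_poly rhom_mconst)
    define \<sigma>\<rho> :: "nat \<Rightarrow> 'a mpoly poly" where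
      "\<sigma>\<rho> = (\<lambda>v. if v = 2*p then [:0, - mvar p, -1:] else if p < v then [:0, - mvar (v-p):] else [:mvar v:])"
    define \<rho> where "\<rho> = mev \<sigma>\<rho> \<kappa>0"
    define J0 :: "'a mpoly poly set" where "J0 = {q. \<exists>c. q = (\<Sum>i<p. c i * fgen p i)}"
    have idlJ: "idl J0" unfolding idl_def
    proof (intro conjI ballI allI)
      show "0 \<in> J0" unfolding J0_def by (auto intro!: exI[of _ "\<lambda>_. 0"])
    next
      fix x y assume "x \<in> J0" "y \<in> J0"
      then obtain c d where "x = (\<Sum>i<p. c i * fgen p i)" "y = (\<Sum>i<p. d i * fgen p i)"
        unfolding J0_def by blast
      then have "x + y = (\<Sum>i<p. (c i + d i) * fgen p i)" by (simp add: sum.distrib distrib_right)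
      then show "x + y \<in> J0" unfolding J0_def by (auto intro!: exI[of _ "\<lambda>i. c i + d i"])
    next
      fix x r assume "x \<in> J0"
      then obtain c where "x = (\<Sum>i<p. c i * fgen p i)" unfolding J0_def by blast
      then have "r * x = (\<Sum>i<p. (r * c i) * fgen p i)" by (simp add: sum_distrib_left mult.assoc)
      then show "r * x \<in> J0" unfolding J0_def by (auto intro!: exI[of _ "\<lambda>i. r * c i"])
    qed
    have fJ: "fgen p i \<in> J0" if "i < p" for i
    proof -
      define ci where "ci = (\<lambda>j. if j = i then 1 else (0::'a mpoly poly))"
      have "fgen p i = (\<Sum>j<p. ci j * fgen p j)"
        using that by (simp add: ci_def if_distrib[of "\<lambda>x. x * _"] cong: if_cong)
      then show ?thesis unfolding J0_def by blast
    qed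
    have gpoly: "[:g:] = mev (\<lambda>v. [:mvar v:]) \<kappa>0 g"
      using rhom_mev_comp[OF rhom_const_poly, of mvar mconst g] by (simp add: mev_id \<kappa>0_def o_def)
    have s1: "[:g:] - \<rho> g \<in> J0"
      unfolding gpoly \<rho>_def
    proof (rule mev_cong[OF idlJ])
      fix v assume "v \<in> mvars g"
      then have v: "1 \<le> v" "v \<le> 2*p" using gS by auto
      show "[:mvar v:] - \<sigma>\<rho> v \<in> J0"
      proof (cases "v = 2*p")
        case True
        then have "[:mvar v:] - \<sigma>\<rho> v = fgen p 0" by (simp add: \<sigma>\<rho>_def fgen_def)
        then show ?thesis using fJ assms by simp
      next
        case F: False
        show ?thesis
        proof (cases "p < v")
          case True
          then have "[:mvar v:] - \<sigma>\<rho> v = fgen p (v - p)" using F by (simp add: \<sigma>\<rho>_def fgen_def)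
          then show ?thesis using fJ F True v by simp
        next
          case False
          then have "[:mvar v:] - \<sigma>\<rho> v = 0" using F by (simp add: \<sigma>\<rho>_def)
          then show ?thesis using idlJ by (simp add: idl_def)
        qed
      qed
    qed
    define \<sigma>\<omega> :: "nat \<Rightarrow> 'a mpoly poly" where
      "\<sigma>\<omega> = (\<lambda>v. if v = 0 then [:0, -1:] else if v = p then [:mvar p, 1:] else [:mvar v:])"
    define \<omega> where "\<omega> = mev \<sigma>\<omega> \<kappa>0"
    have h\<omega>: "rhom \<omega>" unfolding \<omega>_def by (rule rhom_mev[OF h\<kappa>0])
    have \<omega>v: "\<omega> (mvar v) = \<sigma>\<omega> v" for v unfolding \<omega>_def by (rule mev_mvar[OF h\<kappa>0])
    have \<omega>phi: "\<omega> (phi_img p v) = \<sigma>\<rho> v" if "v \<in> mvars g" for v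
    proof -
      from that have v: "1 \<le> v" "v \<le> 2*p" using gS by auto
      consider "v < p" | "v = p" | "p < v" "v < 2*p" | "v = 2*p" using v by linarith
      then show ?thesis
      proof cases
        case 1 then show ?thesis using v by (simp add: phi_img_def \<sigma>\<rho>_def \<omega>v \<sigma>\<omega>_def)
      next
        case 2 then show ?thesis using v assms
          by (simp add: phi_img_def \<sigma>\<rho>_def \<omega>v \<sigma>\<omega>_def rhom_add[OF h\<omega>])
      next
        case 3 then show ?thesis using v assms
          by (simp add: phi_img_def \<sigma>\<rho>_def \<omega>v \<sigma>\<omega>_def rhom_mult[OF h\<omega>])
      next
        case 4 then show ?thesis using v assms
          by (simp add: phi_img_def \<sigma>\<rho>_def \<omega>v \<sigma>\<omega>_def rhom_mult[OF h\<omega>])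
      qed
    qed
    have \<omega>c: "\<omega> \<circ> mconst = \<kappa>0"
      by (rule ext) (simp add: \<omega>_def mev_mconst[OF h\<kappa>0])
    have "\<rho> g = \<omega> (mev (phi_img p) mconst g)"
      unfolding rhom_mev_comp[OF h\<omega>] \<omega>c \<rho>_def by (rule mev_cong0) (simp add: \<omega>phi)
    also have "mev (phi_img p) mconst g = 0" using g0 by (simp add: phi_def msubst_mev)
    finally have "\<rho> g = 0" using rhom_zero[OF h\<omega>] by simp
    with s1 obtain c where gc: "[:g:] = (\<Sum>i<p. c i * fgen p i)" unfolding J0_def by auto
    define \<pi> :: "'a mpoly \<Rightarrow> 'a mpoly" where "\<pi> = mev (\<lambda>v. if v \<in> {1..2*p} then mvar v else 0) mconst"
    have h\<pi>: "rhom \<pi>" unfolding \<pi>_def by (rule rhom_mev[OF rhom_mconst])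
    have \<pi>v: "v \<in> {1..2*p} \<Longrightarrow> \<pi> (mvar v) = mvar v" for v
      unfolding \<pi>_def by (simp add: mev_mvar[OF rhom_mconst])
    have \<pi>g: "\<pi> g = g"
    proof -
      have "\<pi> g = mev mvar mconst g" unfolding \<pi>_def by (rule mev_cong0) (use gS in auto)
      then show ?thesis by (simp add: mev_id)
    qed
    have \<pi>S: "mvars (\<pi> x) \<subseteq> {1..2*p}" for x
      unfolding \<pi>_def by (rule mev_vars) auto
    have hP: "rhom (map_poly \<pi>)" by (rule rhom_map_poly[OF h\<pi>])
    have \<pi>f: "map_poly \<pi> (fgen p i) = fgen p i" if "i < p" for i
      using that assms
      by (simp add: fgen_def map_poly_pCons rhom_zero[OF h\<pi>] rhom_one[OF h\<pi>] \<pi>v)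
    define c' where "c' = (\<lambda>i. map_poly \<pi> (c i))"
    have "[:g:] = map_poly \<pi> [:g:]" by (simp add: map_poly_pCons rhom_zero[OF h\<pi>] \<pi>g)
    also have "\<dots> = (\<Sum>i<p. c' i * fgen p i)"
      unfolding gc rhom_sum[OF hP] rhom_mult[OF hP] c'_def by (simp add: \<pi>f)
    finally have gc': "[:g:] = (\<Sum>i<p. c' i * fgen p i)" .
    have "\<forall>i<p. \<forall>j. coeff (c' i) j \<in> S_ring p"
      using \<pi>S by (simp add: c'_def coeff_map_poly rhom_zero[OF h\<pi>] S_ring_def)
    moreover have "g \<in> S_ring p" using gS by (simp add: S_ring_def)
    ultimately show "g \<in> I_ideal p" unfolding I_ideal_def using gc' by blast
  qed
qed

theorem proposition6p2:
  fixes p :: nat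
  assumes "p \<ge> 3"
  shows "(I_ideal p :: 'a::field mpoly set) = ker_phi p"
  using incl1[OF assms] incl2[OF assms] by (rule equalityI)

end
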